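(* Let $p>1$, $p'=\frac{p}{p-1}$, and let $b\in C^1([0,\infty))$ satisfy $b(t)>0$ for $t\ge0$ and $\limsup_{t\to\infty}\frac{|b'(t)|}{b(t)^2}<1$. Let $\Phi(t)=\int_t^\infty\exp(-\int_t^sb(\sigma)d\sigma)\,ds$. Let $\eta\in C^2([0,\infty))$ satisfy $\eta=1$ on $[0,1/2]$, $\eta$ decreasing on $(1/2,1)$, $\eta=0$ on $[1,\infty)$, and let $\eta^*(s)=0$ for $s\in[0,1/2)$, $\eta^*(s)=\eta(s)$ for $s\ge 1/2$. For $R>0$ set $$s_R(x,t)=R^{-1}\Big(1+|x|^2+\int_0^t\Phi(\sigma)\,d\sigma\Big),\quad \psi_R=[\eta(s_R)]^{2p'},\quad \psi_R^*=[\eta^*(s_R)]^{2p'},$$ on $\mathbb{R}^N\times[0,\infty)$, and $P(R)=\{(x,t)\in\mathbb{R}^N\times[0,\infty): 1+|x|^2+\int_0^t\Phi(\sigma)d\sigma\le R\}$. Then: (i) $\psi_R(x,t)=1$ for $(x,t)\in P(R/2)$ and $\psi_R(x,t)=0$ for $(x,t)\notin P(R)$; (ii) there is $C_1>0$ such that $|\partial_t\psi_R(x,t)|\le C_1R^{-1}\Phi(t)[\psi_R^*(x,t)]^{1/p}$ for all $R>0$ and $(x,t)\in P(R)$; (iii) there is $C_2>0$ such that $|\Delta\psi_R(x,t)|\le C_2R^{-1}[\psi_R^*(x,t)]^{1/p}$ for all $R>0$ and $(x,t)\in P(R)$; (iv) if in addition $1/b\notin L^1(0,\infty)$, there is $C_3>0$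 such that $|\partial_t^2\psi_R(x,t)|\le C_3R^{-1}[\psi_R^*(x,t)]^{1/p}$ for all $R>0$ and $(x,t)\in P(R)$. *)

theory Defs
  imports "HOL-Analysis.Analysis"
begin

definition conj_exp :: "real \<Rightarrow> real" where
  "conj_exp p = p / (p - 1)"

definition Phi :: "(real \<Rightarrow> real) \<Rightarrow> real \<Rightarrow> real" where
  "Phi b t = integral {t..} (\<lambda>s. exp (- integral {t..s} b))"

definition Qty :: "(real \<Rightarrow> real) \<Rightarrow> real ^ 'n \<Rightarrow> real \<Rightarrow> real" where
  "Qty b x t = 1 + (norm x)\<^sup>2 + integral {0..t} (Phi b)"

definition sR :: "(real \<Rightarrow> real) \<Rightarrow> real \<Rightarrow> real ^ 'n \<Rightarrow> real \<Rightarrow> real" where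
  "sR b R x t = Qty b x t / R"

definition eta_star :: "(real \<Rightarrow> real) \<Rightarrow> real \<Rightarrow> real" where
  "eta_star \<eta> s = (if s < 1/2 then 0 else \<eta> s)"

definition psiR :: "(real \<Rightarrow> real) \<Rightarrow> (real \<Rightarrow> real) \<Rightarrow> real \<Rightarrow> real \<Rightarrow> real ^ 'n \<Rightarrow> real \<Rightarrow> real" where
  "psiR b \<eta> p R x t = (\<eta> (sR b R x t)) powr (2 * conj_exp p)"

definition psiR_star :: "(real \<Rightarrow> real) \<Rightarrow> (real \<Rightarrow> real) \<Rightarrow> real \<Rightarrow> real \<Rightarrow> real ^ 'n \<Rightarrow> real \<Rightarrow> real" where
  "psiR_star b \<eta> p R x t = (eta_star \<eta> (sR b R x t)) powr (2 * conj_exp p)"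

definition inP :: "(real \<Rightarrow> real) \<Rightarrow> real \<Rightarrow> real ^ 'n \<Rightarrow> real \<Rightarrow> bool" where
  "inP b R x t \<longleftrightarrow> t \<ge> 0 \<and> Qty b x t \<le> R"

text \<open>Time derivative (one-sided at t = 0, domain [0,infty)).\<close>
definition dt :: "(real ^ 'n \<Rightarrow> real \<Rightarrow> real) \<Rightarrow> real ^ 'n \<Rightarrow> real \<Rightarrow> real" where
  "dt f x t = vector_derivative (\<lambda>\<tau>. f x \<tau>) (at t within {0..})"

definition lap :: "(real ^ 'n \<Rightarrow> real) \<Rightarrow> real ^ 'n \<Rightarrow> real" where
  "lap f x = (\<Sum>i\<in>UNIV. deriv (deriv (\<lambda>r. f (x + r *\<^sub>R axis i 1))) 0)"

end

theory Submission
  imports Defs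
begin


lemma deriv_integral_from:
  fixes f :: "real \<Rightarrow> real"
  assumes "continuous_on {a..} f" "t \<ge> a"
  shows "((\<lambda>u. integral {a..u} f) has_real_derivative f t) (at t within {a..})"
proof -
  have c: "continuous_on {a..t+1} f" using assms(1) by (rule continuous_on_subset) auto
  have "((\<lambda>u. integral {a..u} f) has_real_derivative f t) (at t within {a..t+1})"
    using integral_has_real_derivative[OF c] assms(2) by auto
  moreover have "at t within {a..t+1} = at t within {a..}"
    by (rule at_within_nhd[where S="{..<t+1}"]) auto
  ultimately show ?thesis by simp
qed

lemma integrable_bounded_partial:
  fixes f :: "real \<Rightarrow> real"
  assumes cont: "continuous_on {a..} f" and nn: "\<And>x. x \<ge> a \<Longrightarrow> f x \<ge> 0"
    and bd: "\<And>S. S \<ge> a \<Longrightarrow> integral {a..S} f \<le> M"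
  shows "f integrable_on {a..} \<and> integral {a..} f \<le> M"
proof -
  define g where "g = (\<lambda>k::nat. \<lambda>x. if x \<in> {a..a + real k} then f x else 0)"
  have gi: "integral {a..} (g k) = integral {a..a + real k} f" for k
    unfolding g_def integral_restrict_Int by (rule arg_cong[where f="\<lambda>S. integral S f"]) auto
  have int: "g k integrable_on {a..}" for k
  proof -
    have "f integrable_on {a..a + real k}"
      by (rule integrable_continuous_interval, rule continuous_on_subset[OF cont]) auto
    moreover have "{a..a + real k} \<inter> {a..} = {a..a + real k}" by auto
    ultimately show ?thesis unfolding g_def integrable_restrict_Int by simp
  qed
  have mono: "g k x \<le> g (Suc k) x" if "x \<in> {a..}" for k x
    using that nn by (auto simp: g_def)
  have lim: "(\<lambda>k. g k x) \<longlonglongrightarrow> f x" if "x \<in> {a..}" for x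
  proof (rule tendsto_eventually)
    obtain n :: nat where "x - a \<le> real n" using real_arch_simple by blast
    then show "\<forall>\<^sub>F k in sequentially. g k x = f x"
      unfolding eventually_sequentially using that by (intro exI[of _ n]) (auto simp: g_def)
  qed
  have gnn: "0 \<le> integral {a..a + real k} f" for k
    by (rule integral_nonneg, rule integrable_continuous_interval,
        rule continuous_on_subset[OF cont]) (auto intro: nn)
  have bou: "bounded (range (\<lambda>k. integral {a..} (g k)))"
  proof -
    have "\<bar>integral {a..a + real k} f\<bar> \<le> M" for k using bd[of "a + real k"] gnn[of k] by simp
    then show ?thesis unfolding bounded_iff gi by auto
  qed
  have *: "f integrable_on {a..} \<and> (\<lambda>k. integral {a..} (g k)) \<longlonglongrightarrow> integral {a..} f"
    by (rule monotone_convergence_increasing[OF int mono lim bou]) auto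
  moreover have "integral {a..} f \<le> M"
    by (rule tendsto_upperbound[OF *[THEN conjunct2]]) (auto simp: gi intro!: always_eventually bd)
  ultimately show ?thesis by blast
qed

lemma integral_split_from:
  fixes f :: "real \<Rightarrow> real"
  assumes "continuous_on {t..} f" "t \<le> u" "f integrable_on {u..}"
  shows "f integrable_on {t..} \<and> integral {t..} f = integral {t..u} f + integral {u..} f"
proof -
  have "(f has_integral integral {t..u} f) {t..u}"
    by (rule integrable_integral, rule integrable_continuous_interval, rule continuous_on_subset[OF assms(1)]) auto
  moreover have "(f has_integral integral {u..} f) {u..}" using assms(3) by auto
  ultimately have "(f has_integral (integral {t..u} f + integral {u..} f)) ({t..u} \<union> {u..})"
    by (rule has_integral_Un) (auto intro: negligible_subset[OF negligible_sing[of u]])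
  moreover have "{t..u} \<union> {u..} = {t..}" using assms(2) by auto
  ultimately show ?thesis by (auto simp: has_integral_iff)
qed



locale bctx =
  fixes b b' :: "real \<Rightarrow> real"
  assumes b_deriv: "\<forall>t\<ge>0. (b has_real_derivative b' t) (at t within {0..})"
    and b_pos: "\<forall>t\<ge>0. b t > 0"
    and b_limsup: "Limsup at_top (\<lambda>t. ereal (\<bar>b' t\<bar> / (b t)\<^sup>2)) < 1"

context bctx
begin

abbreviation "EE t \<equiv> exp (- integral {0..t} b)"

lemma b_cont: "continuous_on {0..} b"
  unfolding continuous_on_eq_continuous_within using b_deriv by (meson DERIV_continuous atLeast_iff)

lemma B_deriv: "t \<ge> 0 \<Longrightarrow> ((\<lambda>u. integral {0..u} b) has_real_derivative b t) (at t within {0..})"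
  using deriv_integral_from[OF b_cont] by auto

lemma E_deriv: "t \<ge> 0 \<Longrightarrow> (EE has_real_derivative (- b t * EE t)) (at t within {0..})"
proof -
  assume a: "t \<ge> 0"
  have d: "((\<lambda>u. - integral {0..u} b) has_real_derivative - b t) (at t within {0..})"
    by (rule DERIV_minus[OF B_deriv[OF a]])
  from DERIV_chain2[OF DERIV_exp d] show ?thesis by (simp add: mult.commute)
qed

lemma E_cont: "continuous_on {0..} EE"
  unfolding continuous_on_eq_continuous_within using E_deriv by (meson DERIV_continuous atLeast_iff)

lemma int_b_split:
  fixes t s :: real assumes a: "0 \<le> t" "t \<le> s"
  shows "integral {t..s} b = integral {0..s} b - integral {0..t} b"
proof -
  have "b integrable_on {0..s}"
    by (rule integrable_continuous_interval, rule continuous_on_subset[OF b_cont]) auto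
  then show ?thesis using Henstock_Kurzweil_Integration.integral_combine[where a=0 and c=t and b=s and f=b] a by auto
qed

lemma theta_ex: "\<exists>\<theta> T. \<theta> < 1 \<and> T \<ge> 0 \<and> (\<forall>t\<ge>T. \<bar>b' t\<bar> / (b t)\<^sup>2 < \<theta>)"
proof -
  obtain \<theta> where th: "Limsup at_top (\<lambda>t. ereal (\<bar>b' t\<bar> / (b t)\<^sup>2)) < ereal \<theta>" "ereal \<theta> < 1"
    using ereal_dense2[OF b_limsup] by blast
  have "eventually (\<lambda>t. ereal (\<bar>b' t\<bar> / (b t)\<^sup>2) < ereal \<theta>) at_top"
    by (rule Limsup_lessD[OF th(1)])
  then obtain T where "\<forall>t\<ge>T. \<bar>b' t\<bar> / (b t)\<^sup>2 < \<theta>" by (auto simp: eventually_at_top_linorder)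
  then show ?thesis using th(2) by (intro exI[of _ \<theta>] exI[of _ "max T 0"]) auto
qed

lemma key_bound:
  assumes th: "\<theta> < 1" "T \<ge> 0" "\<forall>t\<ge>T. \<bar>b' t\<bar> / (b t)\<^sup>2 < \<theta>"
    and ts: "T \<le> t" "t \<le> S"
  shows "(1 - \<theta>) * integral {t..S} EE \<le> EE t / b t"
proof -
  define F' where "F' s = ((- b s * EE s) * b s - EE s * b' s) / (b s * b s)" for s
  have dF: "((\<lambda>s. EE s / b s) has_real_derivative F' s) (at s within {0..})" if "s \<ge> 0" for s
    unfolding F'_def using that b_pos b_deriv
    by (intro DERIV_divide E_deriv) auto
  have "(F' has_integral (EE S / b S - EE t / b t)) {t..S}"
  proof (rule fundamental_theorem_of_calculus)
    fix x assume x: "x \<in> {t..S}"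
    then have "x \<ge> 0" using ts th by auto
    then show "((\<lambda>s. EE s / b s) has_vector_derivative F' x) (at x within {t..S})"
    proof -
      have "((\<lambda>s. EE s / b s) has_vector_derivative F' x) (at x within {0..})"
        using dF[OF \<open>x\<ge>0\<close>] by (simp add: has_real_derivative_iff_has_vector_derivative)
      then show ?thesis by (rule has_vector_derivative_within_subset) (use ts th in auto)
    qed
  qed (use ts in auto)
  then have i1: "((\<lambda>s. - F' s) has_integral (EE t / b t - EE S / b S)) {t..S}"
    using has_integral_neg[OF \<open>(F' has_integral _) _\<close>] by simp
  have ic: "EE integrable_on {t..S}"
    by (rule integrable_continuous_interval, rule continuous_on_subset[OF E_cont]) (use ts th in auto)
  have i2: "((\<lambda>s. (1 - \<theta>) * EE s) has_integral ((1 - \<theta>) * integral {t..S} EE)) {t..S}"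
    using has_integral_mult_right[OF ic[unfolded has_integral_integral]] by simp
  have le: "(1 - \<theta>) * EE s \<le> - F' s" if "s \<in> {t..S}" for s
  proof -
    have s: "s \<ge> T" "b s > 0" using that ts b_pos th by auto
    have "\<bar>b' s\<bar> / (b s)\<^sup>2 < \<theta>" using th s by auto
    moreover have "- \<bar>b' s\<bar> / (b s)\<^sup>2 \<le> b' s / (b s)\<^sup>2" by (rule divide_right_mono) auto
    moreover have "- \<bar>b' s\<bar> / (b s)\<^sup>2 = - (\<bar>b' s\<bar> / (b s)\<^sup>2)" by simp
    ultimately have r: "b' s / (b s)\<^sup>2 \<ge> - \<theta>" by linarith
    have "- F' s = EE s * (1 + b' s / (b s)\<^sup>2)"
      unfolding F'_def using s by (simp add: field_simps power2_eq_square)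
    moreover have "(1 - \<theta>) * EE s \<le> EE s * (1 + b' s / (b s)\<^sup>2)"
      using r by (simp add: mult.commute mult_left_mono)
    ultimately show ?thesis by simp
  qed
  have "(1 - \<theta>) * integral {t..S} EE \<le> EE t / b t - EE S / b S"
    by (rule has_integral_le[OF i2 i1 le])
  moreover have "EE S / b S > 0" using b_pos ts th by auto
  ultimately show ?thesis by linarith
qed

end


context bctx
begin

lemma E_int_from: assumes t: "t \<ge> 0" shows "EE integrable_on {t..}"
proof -
  obtain \<theta> T where th: "\<theta> < 1" "T \<ge> 0" "\<forall>t\<ge>T. \<bar>b' t\<bar> / (b t)\<^sup>2 < \<theta>"
    using theta_ex by blast
  have big: "EE integrable_on {u..} \<and> integral {u..} EE \<le> EE u / b u / (1 - \<theta>)" if u: "u \<ge> T" for u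
  proof (rule integrable_bounded_partial)
    show "continuous_on {u..} EE" by (rule continuous_on_subset[OF E_cont]) (use u th in auto)
    show "0 \<le> EE x" for x by simp
    fix S assume "u \<le> S"
    then have "(1 - \<theta>) * integral {u..S} EE \<le> EE u / b u" by (rule key_bound[OF th u])
    then show "integral {u..S} EE \<le> EE u / b u / (1 - \<theta>)"
      using th(1) by (metis diff_gt_0_iff_gt mult.commute pos_le_divide_eq)
  qed
  show ?thesis
  proof (cases "t \<ge> T")
    case True then show ?thesis using big by blast
  next
    case False
    show ?thesis
      by (rule integral_split_from[where t=t and u=T, THEN conjunct1])
        (use False big[of T] t in \<open>auto intro: continuous_on_subset[OF E_cont]\<close>)
  qed
qed

lemma J_split: "t \<ge> 0 \<Longrightarrow> integral {0..} EE = integral {0..t} EE + integral {t..} EE"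
proof -
  assume t: "t \<ge> 0"
  have "EE integrable_on {t..}" by (rule E_int_from[OF t])
  then show ?thesis using integral_split_from[of 0 EE t] E_cont t by blast
qed

lemma Phi_eq: assumes t: "t \<ge> 0" shows "Phi b t = integral {t..} EE / EE t"
proof -
  have "Phi b t = integral {t..} (\<lambda>s. inverse (EE t) *\<^sub>R EE s)"
    unfolding Phi_def
  proof (rule integral_cong)
    fix s assume "s \<in> {t..}"
    then have "t \<le> s" by simp
    then have "integral {t..s} b = integral {0..s} b - integral {0..t} b"
      by (rule int_b_split[OF t])
    then show "exp (- integral {t..s} b) = inverse (EE t) *\<^sub>R EE s"
      by (simp add: exp_diff[symmetric] exp_minus[symmetric] field_simps)
  qed
  then show ?thesis by (simp add: divide_inverse mult.commute)
qed

lemma J_deriv: assumes t: "t \<ge> 0"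
  shows "((\<lambda>u. integral {u..} EE) has_real_derivative - EE t) (at t within {0..})"
proof -
  have "((\<lambda>u. integral {0..} EE - integral {0..u} EE) has_real_derivative 0 - EE t) (at t within {0..})"
    by (intro DERIV_diff DERIV_const deriv_integral_from[OF E_cont t])
  then have "((\<lambda>u. integral {0..} EE - integral {0..u} EE) has_real_derivative - EE t) (at t within {0..})"
    by simp
  then show ?thesis
    by (rule has_field_derivative_transform_within[where d=1]) (use t J_split in auto)
qed

lemma Phi_deriv: assumes t: "t \<ge> 0"
  shows "(Phi b has_real_derivative (b t * Phi b t - 1)) (at t within {0..})"
proof -
  have "((\<lambda>u. integral {u..} EE / EE u) has_real_derivative
     ((- EE t) * EE t - integral {t..} EE * (- b t * EE t)) / (EE t * EE t)) (at t within {0..})"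
    by (intro DERIV_divide J_deriv E_deriv t) simp
  moreover have "((- EE t) * EE t - integral {t..} EE * (- b t * EE t)) / (EE t * EE t) = b t * Phi b t - 1"
    using Phi_eq[OF t] by (simp add: field_simps)
  ultimately have "((\<lambda>u. integral {u..} EE / EE u) has_real_derivative (b t * Phi b t - 1)) (at t within {0..})"
    by simp
  then show ?thesis
    by (rule has_field_derivative_transform_within[where d=1]) (use t Phi_eq in auto)
qed

lemma Phi_cont: "continuous_on {0..} (Phi b)"
  unfolding continuous_on_eq_continuous_within using Phi_deriv by (meson DERIV_continuous atLeast_iff)

lemma Phi_nonneg: assumes t: "t \<ge> 0" shows "Phi b t \<ge> 0"
proof -
  have "integral {t..} EE \<ge> 0" by (rule integral_nonneg[OF E_int_from[OF t]]) simp
  then show ?thesis using Phi_eq[OF t] by simp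
qed

lemma bPhi_bound: "\<exists>L. L \<ge> 0 \<and> (\<forall>t\<ge>0. \<bar>b t * Phi b t - 1\<bar> \<le> L)"
proof -
  obtain \<theta> T where th: "\<theta> < 1" "T \<ge> 0" "\<forall>t\<ge>T. \<bar>b' t\<bar> / (b t)\<^sup>2 < \<theta>"
    using theta_ex by blast
  have big: "b u * Phi b u \<le> 1 / (1 - \<theta>)" if u: "u \<ge> T" for u
  proof -
    have "EE integrable_on {u..} \<and> integral {u..} EE \<le> EE u / b u / (1 - \<theta>)"
    proof (rule integrable_bounded_partial)
      show "continuous_on {u..} EE" by (rule continuous_on_subset[OF E_cont]) (use u th in auto)
      show "0 \<le> EE x" for x by simp
      fix S assume "u \<le> S"
      then have "(1 - \<theta>) * integral {u..S} EE \<le> EE u / b u" by (rule key_bound[OF th u])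
      then show "integral {u..S} EE \<le> EE u / b u / (1 - \<theta>)"
        using th(1) by (metis diff_gt_0_iff_gt mult.commute pos_le_divide_eq)
    qed
    then have "integral {u..} EE \<le> EE u / b u / (1 - \<theta>)" by blast
    moreover have "b u > 0" using b_pos u th by auto
    ultimately have "b u * integral {u..} EE \<le> b u * (EE u / b u / (1 - \<theta>))"
      by (intro mult_left_mono) auto
    also have "\<dots> = EE u / (1 - \<theta>)" using \<open>b u > 0\<close> by simp
    finally have *: "b u * integral {u..} EE \<le> EE u / (1 - \<theta>)" .
    have "b u * Phi b u = (b u * integral {u..} EE) / EE u" using Phi_eq[of u] u th by simp
    also have "\<dots> \<le> (EE u / (1 - \<theta>)) / EE u" by (rule divide_right_mono[OF *]) simp
    also have "\<dots> = 1 / (1 - \<theta>)" by simp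
    finally show ?thesis .
  qed
  have "continuous_on {0..T} (\<lambda>t. b t * Phi b t)"
    by (intro continuous_intros; rule continuous_on_subset[OF b_cont] continuous_on_subset[OF Phi_cont]) auto
  then have "compact ((\<lambda>t. b t * Phi b t) ` {0..T})" by (rule compact_continuous_image) simp
  then obtain K where K: "\<forall>x\<in>(\<lambda>t. b t * Phi b t) ` {0..T}. norm x \<le> K"
    using compact_imp_bounded bounded_iff by metis
  have "\<bar>b t * Phi b t - 1\<bar> \<le> max K (1 / (1 - \<theta>)) + 1" if t: "t \<ge> 0" for t
  proof -
    have nn: "b t * Phi b t \<ge> 0" using b_pos Phi_nonneg[OF t] t by (simp add: less_imp_le)
    have "b t * Phi b t \<le> max K (1 / (1 - \<theta>))"
    proof (cases "t \<ge> T")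
      case True then show ?thesis using big by force
    next
      case False then have "t \<in> {0..T}" using t by auto
      then show ?thesis using K by force
    qed
    then show ?thesis using nn by linarith
  qed
  moreover have "max K (1 / (1 - \<theta>)) + 1 \<ge> 0"
  proof -
    have "1 / (1 - \<theta>) > 0" using th(1) by simp
    then show ?thesis by linarith
  qed
  ultimately show ?thesis by blast
qed

lemma Phi_sq: "\<exists>C. \<forall>t\<ge>0. (Phi b t)\<^sup>2 \<le> C * (1 + integral {0..t} (Phi b))"
proof -
  obtain L where L: "L \<ge> 0" "\<forall>t\<ge>0. \<bar>b t * Phi b t - 1\<bar> \<le> L" using bPhi_bound by blast
  define h where "h u = (Phi b u)\<^sup>2 - 2 * L * integral {0..u} (Phi b)" for u
  define h' where "h' u = 2 * Phi b u * (b u * Phi b u - 1) - 2 * L * Phi b u" for u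
  have dh: "(h has_real_derivative h' u) (at u within {0..})" if u: "u \<ge> 0" for u
  proof -
    have a: "((\<lambda>u. (Phi b u)\<^sup>2) has_real_derivative of_nat 2 * ((b u * Phi b u - 1) * (Phi b u)^(2 - Suc 0))) (at u within {0..})"
      by (rule DERIV_power[OF Phi_deriv[OF u]])
    then have a: "((\<lambda>u. (Phi b u)\<^sup>2) has_real_derivative 2 * Phi b u * (b u * Phi b u - 1)) (at u within {0..})"
      by (simp add: algebra_simps)
    have c: "((\<lambda>u. 2 * L * integral {0..u} (Phi b)) has_real_derivative 2 * L * Phi b u) (at u within {0..})"
      by (rule DERIV_cmult[OF deriv_integral_from[OF Phi_cont u]])
    show ?thesis unfolding h_def h'_def using DERIV_diff[OF a c] by simp
  qed
  have I0: "integral {0..t} (Phi b) \<ge> 0" if "t \<ge> 0" for t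
    by (rule integral_nonneg, rule integrable_continuous_interval, rule continuous_on_subset[OF Phi_cont])
      (auto intro: Phi_nonneg)
  have "(Phi b t)\<^sup>2 \<le> ((Phi b 0)\<^sup>2 + 2 * L) * (1 + integral {0..t} (Phi b))" if t: "t \<ge> 0" for t
  proof -
    have "(h' has_integral (h t - h 0)) {0..t}"
    proof (rule fundamental_theorem_of_calculus)
      fix x assume x: "x \<in> {0..t}"
      have "(h has_vector_derivative h' x) (at x within {0..})"
        using dh[of x] x by (simp add: has_real_derivative_iff_has_vector_derivative)
      then show "(h has_vector_derivative h' x) (at x within {0..t})"
        by (rule has_vector_derivative_within_subset) auto
    qed (use t in auto)
    moreover have "((\<lambda>x. 0) has_integral 0) {0..t}" by simp
    moreover have "h' x \<le> 0" if "x \<in> {0..t}" for x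
    proof -
      have "Phi b x \<ge> 0" "b x * Phi b x - 1 \<le> L" using that Phi_nonneg L by auto
      then have "2 * Phi b x * (b x * Phi b x - 1) \<le> 2 * Phi b x * L"
        by (intro mult_left_mono) auto
      then show ?thesis unfolding h'_def by (simp add: mult.commute)
    qed
    ultimately have "h t - h 0 \<le> 0" by (rule has_integral_le)
    then have "(Phi b t)\<^sup>2 \<le> (Phi b 0)\<^sup>2 + 2 * L * integral {0..t} (Phi b)"
      unfolding h_def by simp
    also have "\<dots> \<le> ((Phi b 0)\<^sup>2 + 2 * L) * (1 + integral {0..t} (Phi b))"
      using I0[OF t] L(1) by (simp add: algebra_simps)
    finally show ?thesis .
  qed
  then show ?thesis by blast
qed

end


locale ectx =
  fixes \<eta> \<eta>' \<eta>'' :: "real \<Rightarrow> real" and q :: real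
  assumes q: "q > 2"
    and eta_deriv: "\<forall>s\<ge>0. (\<eta> has_real_derivative \<eta>' s) (at s within {0..})"
    and eta'_deriv: "\<forall>s\<ge>0. (\<eta>' has_real_derivative \<eta>'' s) (at s within {0..})"
    and eta''_cont: "continuous_on {0..} \<eta>''"
    and eta_one: "\<forall>s. 0 \<le> s \<and> s \<le> 1/2 \<longrightarrow> \<eta> s = 1"
    and eta_decr: "\<forall>s t. 1/2 < s \<and> s \<le> t \<and> t < 1 \<longrightarrow> \<eta> t \<le> \<eta> s"
    and eta_zero: "\<forall>s\<ge>1. \<eta> s = 0"

context ectx
begin

lemma at_pos: "(s::real) > 0 \<Longrightarrow> at s within {0..} = at s"
  by (rule at_within_nhd[where S="{0::real<..}"]) auto

lemma d1: "s > 0 \<Longrightarrow> (\<eta> has_real_derivative \<eta>' s) (at s)"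
  using eta_deriv at_pos by (metis less_imp_le)

lemma d2: "s > 0 \<Longrightarrow> (\<eta>' has_real_derivative \<eta>'' s) (at s)"
  using eta'_deriv at_pos by (metis less_imp_le)

lemma eta_cont: "continuous_on {0..} \<eta>"
  unfolding continuous_on_eq_continuous_within using eta_deriv by (meson DERIV_continuous atLeast_iff)

lemma eta'_cont: "continuous_on {0..} \<eta>'"
  unfolding continuous_on_eq_continuous_within using eta'_deriv by (meson DERIV_continuous atLeast_iff)

lemma eta_le1: assumes "s \<ge> 0" shows "\<eta> s \<le> 1"
proof (cases "1/2 < s \<and> s < 1")
  case True
  have "isCont \<eta> (1/2)" using d1[of "1/2"] DERIV_isCont by auto
  then have "(\<eta> \<longlongrightarrow> \<eta> (1/2)) (at_right (1/2))"
    by (simp add: isCont_def filterlim_at_split)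
  moreover have "eventually (\<lambda>y. \<eta> s \<le> \<eta> y) (at_right (1/2))"
    unfolding eventually_at_right_field using True eta_decr by (intro exI[of _ s]) auto
  ultimately have "\<eta> s \<le> \<eta> (1/2)" by (rule tendsto_lowerbound) simp
  then show ?thesis using eta_one by simp
next
  case False then show ?thesis using eta_one eta_zero assms by (cases "s \<le> 1/2") auto
qed

lemma eta_ge0: assumes "s \<ge> 0" shows "\<eta> s \<ge> 0"
proof (cases "1/2 < s \<and> s < 1")
  case True
  have "isCont \<eta> 1" using d1[of 1] DERIV_isCont by auto
  then have "(\<eta> \<longlongrightarrow> \<eta> 1) (at_left 1)"
    by (simp add: isCont_def filterlim_at_split)
  moreover have "eventually (\<lambda>y. \<eta> y \<le> \<eta> s) (at_left 1)"
    unfolding eventually_at_left_field using True eta_decr by (intro exI[of _ s]) auto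
  ultimately have "\<eta> 1 \<le> \<eta> s" by (rule tendsto_upperbound) simp
  then show ?thesis using eta_zero by simp
next
  case False then show ?thesis using eta_one eta_zero assms by (cases "s \<le> 1/2") auto
qed

lemma const_region:
  assumes "s \<in> U" "open U" "U \<subseteq> {0<..}" "\<And>y. y \<in> U \<Longrightarrow> \<eta> y = c"
  shows "\<eta>' s = 0 \<and> \<eta>'' s = 0"
proof -
  have z: "\<eta>' y = 0" if "y \<in> U" for y
  proof -
    have "((\<lambda>_. c) has_real_derivative 0) (at y)" by simp
    then have "(\<eta> has_real_derivative 0) (at y)"
      by (rule has_field_derivative_transform_within_open[OF _ assms(2) that]) (use assms(4) in auto)
    moreover have "(\<eta> has_real_derivative \<eta>' y) (at y)" using d1 that assms(3) by auto
    ultimately show ?thesis using DERIV_unique by blast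
  qed
  have "((\<lambda>_. 0) has_real_derivative 0) (at s)" by simp
  then have "(\<eta>' has_real_derivative 0) (at s)"
    by (rule has_field_derivative_transform_within_open[OF _ assms(2) assms(1)]) (use z in auto)
  moreover have "(\<eta>' has_real_derivative \<eta>'' s) (at s)" using d2 assms(1,3) by auto
  ultimately show ?thesis using DERIV_unique z assms(1) by blast
qed

lemma small_zero: "0 < s \<Longrightarrow> s < 1/2 \<Longrightarrow> \<eta>' s = 0 \<and> \<eta>'' s = 0"
  by (rule const_region[where U="{0<..<1/2}" and c=1]) (use eta_one in auto)

lemma big_zero: "1 < s \<Longrightarrow> \<eta>' s = 0 \<and> \<eta>'' s = 0"
  by (rule const_region[where U="{1<..}" and c=0]) (use eta_zero in auto)

lemma deriv_bounds: "\<exists>M. M \<ge> 0 \<and> (\<forall>s>0. \<bar>\<eta>' s\<bar> \<le> M \<and> \<bar>\<eta>'' s\<bar> \<le> M)"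
proof -
  have "compact (\<eta>' ` {0..1})" by (rule compact_continuous_image, rule continuous_on_subset[OF eta'_cont]) auto
  then obtain M1 where M1: "\<forall>x\<in>\<eta>' ` {0..1}. norm x \<le> M1" using compact_imp_bounded bounded_iff by metis
  have "compact (\<eta>'' ` {0..1})" by (rule compact_continuous_image, rule continuous_on_subset[OF eta''_cont]) auto
  then obtain M2 where M2: "\<forall>x\<in>\<eta>'' ` {0..1}. norm x \<le> M2" using compact_imp_bounded bounded_iff by metis
  have "\<bar>\<eta>' s\<bar> \<le> max (max M1 M2) 0 \<and> \<bar>\<eta>'' s\<bar> \<le> max (max M1 M2) 0" if "s > 0" for s
  proof (cases "s \<le> 1")
    case True then have "s \<in> {0..1}" using that by auto
    then show ?thesis using M1 M2 by force
  next
    case False then show ?thesis using big_zero by auto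
  qed
  then show ?thesis by (intro exI[of _ "max (max M1 M2) 0"]) auto
qed

definition "G s = \<eta> s powr q"
definition "G1 s = q * \<eta> s powr (q - 1) * \<eta>' s"
definition "G2 s = q * (q - 1) * \<eta> s powr (q - 2) * (\<eta>' s)\<^sup>2 + q * \<eta> s powr (q - 1) * \<eta>'' s"

lemma zero_min: assumes "s > 0" "\<eta> s = 0" shows "\<eta>' s = 0"
  by (rule DERIV_local_min[OF d1[OF assms(1)] assms(1)]) (use assms eta_ge0 in auto)

lemma G_deriv: assumes s: "s > 0" shows "(G has_real_derivative G1 s) (at s)"
proof (cases "\<eta> s > 0")
  case True
  have "((\<lambda>y. \<eta> y powr q) has_real_derivative (q * \<eta> s powr (q - 1)) * \<eta>' s) (at s)"
    by (rule DERIV_chain2[OF has_real_derivative_powr[OF True] d1[OF s]])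
  then show ?thesis unfolding G_def G1_def by simp
next
  case False
  then have z: "\<eta> s = 0" using eta_ge0[of s] s by linarith
  have z': "\<eta>' s = 0" by (rule zero_min[OF s z])
  have "((\<lambda>y. (\<eta> y - \<eta> s) / (y - s)) \<longlongrightarrow> 0) (at s)"
    using d1[OF s] z' by (simp add: has_field_derivative_iff)
  moreover have "((\<lambda>y. \<eta> y powr (q - 1)) \<longlongrightarrow> 0) (at s)"
  proof (rule tendsto_zero_powrI)
    show "(\<eta> \<longlongrightarrow> 0) (at s)" using d1[OF s] DERIV_isCont z isCont_def by metis
    show "\<forall>\<^sub>F x in at s. 0 \<le> \<eta> x"
      unfolding eventually_at using s by (intro exI[of _ s]) (auto intro!: eta_ge0 simp: dist_real_def)
  qed (use q in auto)
  ultimately have "((\<lambda>y. \<eta> y powr (q - 1) * ((\<eta> y - \<eta> s) / (y - s))) \<longlongrightarrow> 0 * 0) (at s)"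
    by (intro tendsto_mult)
  then have "((\<lambda>y. \<eta> y powr (q - 1) * ((\<eta> y - \<eta> s) / (y - s))) \<longlongrightarrow> 0) (at s)" by simp
  moreover have "\<forall>\<^sub>F y in at s. \<eta> y powr (q - 1) * ((\<eta> y - \<eta> s) / (y - s)) = (G y - G s) / (y - s)"
  proof -
    have "\<forall>y. y \<noteq> s \<and> dist y s < s \<longrightarrow> \<eta> y powr (q - 1) * ((\<eta> y - \<eta> s) / (y - s)) = (G y - G s) / (y - s)"
    proof (intro allI impI)
    fix y assume y: "y \<noteq> s \<and> dist y s < s"
    then have "y > 0" by (auto simp: dist_real_def)
    have "\<eta> y powr (q - 1) * \<eta> y = \<eta> y powr q"
    proof (cases "\<eta> y = 0")
      case False
      then have "\<eta> y > 0" using eta_ge0[of y] \<open>y > 0\<close> by (simp add: less_le)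
      have "\<eta> y powr (q - 1) * \<eta> y powr 1 = \<eta> y powr (q - 1 + 1)" by (rule powr_add[symmetric])
      then show ?thesis using \<open>\<eta> y > 0\<close> by simp
    qed simp
    then show "\<eta> y powr (q - 1) * ((\<eta> y - \<eta> s) / (y - s)) = (G y - G s) / (y - s)"
      unfolding G_def using z q by simp
    qed
    then show ?thesis unfolding eventually_at using s by blast
  qed
  ultimately have "((\<lambda>y. (G y - G s) / (y - s)) \<longlongrightarrow> 0) (at s)"
    by (rule Lim_transform_eventually)
  then show ?thesis unfolding G1_def using z' by (simp add: has_field_derivative_iff)
qed

lemma G1_deriv: assumes s: "s > 0" shows "(G1 has_real_derivative G2 s) (at s)"
proof (cases "\<eta> s > 0")
  case True
  have p: "((\<lambda>y. \<eta> y powr (q - 1)) has_real_derivative ((q - 1) * \<eta> s powr (q - 1 - 1)) * \<eta>' s) (at s)"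
    by (rule DERIV_chain2[OF has_real_derivative_powr[OF True] d1[OF s]])
  have "((\<lambda>y. q * \<eta> y powr (q - 1) * \<eta>' y) has_real_derivative
      q * (((q - 1) * \<eta> s powr (q - 1 - 1)) * \<eta>' s) * \<eta>' s + q * \<eta> s powr (q - 1) * \<eta>'' s) (at s)"
    using DERIV_mult[OF DERIV_cmult[OF p, of q] d2[OF s]] by (simp add: algebra_simps)
  moreover have "q - 1 - 1 = q - 2" by simp
  ultimately show ?thesis unfolding G1_def G2_def by (simp add: power2_eq_square algebra_simps)
next
  case False
  then have z: "\<eta> s = 0" using eta_ge0[of s] s by linarith
  have z': "\<eta>' s = 0" by (rule zero_min[OF s z])
  have "((\<lambda>y. (\<eta>' y - \<eta>' s) / (y - s)) \<longlongrightarrow> \<eta>'' s) (at s)"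
    using d2[OF s] by (simp add: has_field_derivative_iff)
  moreover have "((\<lambda>y. \<eta> y powr (q - 1)) \<longlongrightarrow> 0) (at s)"
  proof (rule tendsto_zero_powrI)
    show "(\<eta> \<longlongrightarrow> 0) (at s)" using d1[OF s] DERIV_isCont z isCont_def by metis
    show "\<forall>\<^sub>F x in at s. 0 \<le> \<eta> x"
      unfolding eventually_at using s by (intro exI[of _ s]) (auto intro!: eta_ge0 simp: dist_real_def)
  qed (use q in auto)
  ultimately have "((\<lambda>y. q * \<eta> y powr (q - 1) * ((\<eta>' y - \<eta>' s) / (y - s))) \<longlongrightarrow> q * 0 * \<eta>'' s) (at s)"
    by (intro tendsto_mult tendsto_const)
  moreover have "(\<lambda>y. q * \<eta> y powr (q - 1) * ((\<eta>' y - \<eta>' s) / (y - s))) = (\<lambda>y. (G1 y - G1 s) / (y - s))"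
    unfolding G1_def using z z' by auto
  ultimately have "((\<lambda>y. (G1 y - G1 s) / (y - s)) \<longlongrightarrow> 0) (at s)" by simp
  moreover have "G2 s = 0" unfolding G2_def using z z' q by simp
  ultimately show ?thesis by (simp add: has_field_derivative_iff)
qed

lemma G_bounds: "\<exists>K>0. \<forall>s>0. \<bar>G1 s\<bar> \<le> K * eta_star \<eta> s powr (q - 2) \<and> \<bar>G2 s\<bar> \<le> K * eta_star \<eta> s powr (q - 2)"
proof -
  obtain M where M: "M \<ge> 0" "\<forall>s>0. \<bar>\<eta>' s\<bar> \<le> M \<and> \<bar>\<eta>'' s\<bar> \<le> M" using deriv_bounds by blast
  define K where "K = q * (q - 1) * M\<^sup>2 + q * M + 1"
  have K: "K > 0"
  proof -
    have "q * (q - 1) * M\<^sup>2 \<ge> 0" "q * M \<ge> 0" using q M by auto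
    then show ?thesis unfolding K_def by linarith
  qed
  have K1: "q * M \<le> K" "q * (q - 1) * M\<^sup>2 + q * M \<le> K"
  proof -
    have "q * (q - 1) * M\<^sup>2 \<ge> 0" "q * M \<ge> 0" using q M by auto
    then show "q * M \<le> K" "q * (q - 1) * M\<^sup>2 + q * M \<le> K" unfolding K_def by linarith+
  qed
  have "\<bar>G1 s\<bar> \<le> K * eta_star \<eta> s powr (q - 2) \<and> \<bar>G2 s\<bar> \<le> K * eta_star \<eta> s powr (q - 2)" if s: "s > 0" for s
  proof (cases "s < 1/2")
    case True
    then have "\<eta>' s = 0" "\<eta>'' s = 0" using small_zero s by auto
    then show ?thesis unfolding G1_def G2_def eta_star_def using True by simp
  next
    case False
    then have es: "eta_star \<eta> s = \<eta> s" unfolding eta_star_def by simp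
    define e where "e = \<eta> s"
    have e: "0 \<le> e" "e \<le> 1" unfolding e_def using eta_ge0 eta_le1 s by auto
    have e1: "e powr (q - 1) \<le> e powr (q - 2)" by (rule powr_mono') (use e in auto)
    have e0: "0 \<le> e powr (q - 2)" by simp
    have a1: "\<bar>\<eta>' s\<bar> \<le> M" "\<bar>\<eta>'' s\<bar> \<le> M" using M s by auto
    have "\<bar>G1 s\<bar> = q * e powr (q - 1) * \<bar>\<eta>' s\<bar>" unfolding G1_def e_def using q by (simp add: abs_mult)
    also have "\<dots> \<le> q * e powr (q - 2) * M"
      using q e1 a1 by (intro mult_mono) (auto intro: mult_left_mono)
    also have "\<dots> = (q * M) * e powr (q - 2)" by simp
    also have "\<dots> \<le> K * e powr (q - 2)" by (rule mult_right_mono[OF K1(1) e0])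
    finally have g1: "\<bar>G1 s\<bar> \<le> K * e powr (q - 2)" .
    have "\<bar>G2 s\<bar> \<le> q * (q - 1) * e powr (q - 2) * (\<eta>' s)\<^sup>2 + q * e powr (q - 1) * \<bar>\<eta>'' s\<bar>"
      unfolding G2_def e_def using q by (simp add: abs_mult abs_triangle_ineq[THEN order_trans])
    also have "\<dots> \<le> q * (q - 1) * e powr (q - 2) * M\<^sup>2 + q * e powr (q - 2) * M"
    proof (rule add_mono)
      have "(\<eta>' s)\<^sup>2 \<le> M\<^sup>2" using a1 by (metis abs_le_square_iff abs_of_nonneg M(1))
      then show "q * (q - 1) * e powr (q - 2) * (\<eta>' s)\<^sup>2 \<le> q * (q - 1) * e powr (q - 2) * M\<^sup>2"
        using q e0 by (intro mult_left_mono) auto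
      show "q * e powr (q - 1) * \<bar>\<eta>'' s\<bar> \<le> q * e powr (q - 2) * M"
        using q e1 a1 by (intro mult_mono) (auto intro: mult_left_mono)
    qed
    also have "\<dots> = (q * (q - 1) * M\<^sup>2 + q * M) * e powr (q - 2)" by (simp add: algebra_simps)
    also have "\<dots> \<le> K * e powr (q - 2)" by (rule mult_right_mono[OF K1(2) e0])
    finally show ?thesis using g1 es e_def by simp
  qed
  then show ?thesis using K by blast
qed

end


locale mctx = bctx b b' + ectx \<eta> \<eta>' \<eta>'' q for b b' \<eta> \<eta>' \<eta>'' q

context mctx
begin

lemma I0: "t \<ge> 0 \<Longrightarrow> integral {0..t} (Phi b) \<ge> 0"
  by (rule integral_nonneg, rule integrable_continuous_interval, rule continuous_on_subset[OF Phi_cont])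
    (auto intro: Phi_nonneg)

lemma Qge1: "t \<ge> 0 \<Longrightarrow> Qty b x t \<ge> 1"
  unfolding Qty_def using I0[of t] by simp

lemma S_pos: "R > 0 \<Longrightarrow> t \<ge> 0 \<Longrightarrow> sR b R x t > 0"
  unfolding sR_def using Qge1[of t x] by simp

lemma S_deriv: assumes t: "t \<ge> 0"
  shows "((\<lambda>\<tau>. sR b R x \<tau>) has_real_derivative Phi b t / R) (at t within {0..})"
  unfolding sR_def Qty_def
  using DERIV_cdivide[OF DERIV_add[OF DERIV_const deriv_integral_from[OF Phi_cont t]], of "1 + (norm x)\<^sup>2" R]
  by simp

lemma nbot: assumes "(t::real) \<ge> 0" shows "at t within {0..} \<noteq> bot"
proof (cases "t = 0")
  case True then show ?thesis by (simp add: at_within_Ici_at_right)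
next
  case False
  then have "at t within {0..} = at t" using assms
    by (intro at_within_nhd[where S="{0::real<..}"]) auto
  then show ?thesis by simp
qed

lemma dt_psi: assumes qd: "q = 2 * conj_exp p" and R: "R > 0" and t: "t \<ge> 0"
  shows "dt (psiR b \<eta> p R) x t = G1 (sR b R x t) * (Phi b t / R)"
proof -
  have psi: "(\<lambda>\<tau>. psiR b \<eta> p R x \<tau>) = (\<lambda>\<tau>. G (sR b R x \<tau>))"
    unfolding psiR_def G_def using qd by simp
  have "((\<lambda>\<tau>. G (sR b R x \<tau>)) has_real_derivative G1 (sR b R x t) * (Phi b t / R)) (at t within {0..})"
    by (rule DERIV_chain2[OF G_deriv[OF S_pos[OF R t]] S_deriv[OF t]])
  then show ?thesis unfolding dt_def psi
    by (intro vector_derivative_within[OF nbot[OF t]]) (simp add: has_real_derivative_iff_has_vector_derivative)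
qed

lemma ddt_psi: assumes qd: "q = 2 * conj_exp p" and R: "R > 0" and t: "t \<ge> 0"
  shows "dt (dt (psiR b \<eta> p R)) x t =
    G2 (sR b R x t) * (Phi b t / R) * (Phi b t / R) + (b t * Phi b t - 1) / R * G1 (sR b R x t)"
proof -
  have D: "((\<lambda>\<tau>. G1 (sR b R x \<tau>) * (Phi b \<tau> / R)) has_real_derivative
     G2 (sR b R x t) * (Phi b t / R) * (Phi b t / R) + (b t * Phi b t - 1) / R * G1 (sR b R x t)) (at t within {0..})"
    by (rule DERIV_mult[OF DERIV_chain2[OF G1_deriv[OF S_pos[OF R t]] S_deriv[OF t]] DERIV_cdivide[OF Phi_deriv[OF t]]])
  have "((\<lambda>\<tau>. dt (psiR b \<eta> p R) x \<tau>) has_real_derivative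
     G2 (sR b R x t) * (Phi b t / R) * (Phi b t / R) + (b t * Phi b t - 1) / R * G1 (sR b R x t)) (at t within {0..})"
  proof (rule has_field_derivative_transform_within[OF D, where d=1])
    fix \<tau> assume "\<tau> \<in> {0..}" "dist \<tau> t < 1"
    then show "G1 (sR b R x \<tau>) * (Phi b \<tau> / R) = dt (psiR b \<eta> p R) x \<tau>"
      using dt_psi[OF qd R, of \<tau> x] by simp
  qed (use t in auto)
  then show ?thesis unfolding dt_def[of "dt (psiR b \<eta> p R)"]
    by (intro vector_derivative_within[OF nbot[OF t]]) (simp add: has_real_derivative_iff_has_vector_derivative)
qed

lemma lap_i: assumes qd: "q = 2 * conj_exp p" and R: "R > 0" and t: "t \<ge> 0"
  shows "deriv (deriv (\<lambda>r. psiR b \<eta> p R (x + r *\<^sub>R axis i 1) t)) 0 =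
    G2 (sR b R x t) * (2 * x$i / R) * (2 * x$i / R) + 2 / R * G1 (sR b R x t)"
proof -
  define A where "A = 1 + (norm x)\<^sup>2 + integral {0..t} (Phi b)"
  define xi where "xi = x$i"
  define \<sigma> where "\<sigma> r = (A + 2 * xi * r + r^2) / R" for r
  have nrm: "(norm (x + r *\<^sub>R axis i 1))\<^sup>2 = (norm x)\<^sup>2 + 2 * xi * r + r^2" for r
    unfolding xi_def power2_norm_eq_inner
    by (simp add: inner_add_left inner_add_right inner_axis inner_axis' inner_axis_axis
        inner_commute algebra_simps power2_eq_square)
  have g: "(\<lambda>r. psiR b \<eta> p R (x + r *\<^sub>R axis i 1) t) = (\<lambda>r. G (\<sigma> r))"
  proof
    fix r
    show "psiR b \<eta> p R (x + r *\<^sub>R axis i 1) t = G (\<sigma> r)"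
      unfolding psiR_def G_def sR_def Qty_def \<sigma>_def A_def nrm using qd by (simp add: algebra_simps)
  qed
  have xi2: "xi^2 \<le> (norm x)\<^sup>2"
    unfolding xi_def using component_le_norm_cart[of x i] by (metis abs_le_square_iff abs_norm_cancel)
  have A1: "A \<ge> 1 + (norm x)\<^sup>2" unfolding A_def using I0[OF t] by simp
  have spos: "\<sigma> r > 0" for r
  proof -
    have "A + 2 * xi * r + r^2 = (A - xi^2) + (r + xi)^2" by (simp add: algebra_simps power2_eq_square)
    also have "\<dots> \<ge> 1" using A1 xi2 by (smt (verit) zero_le_power2)
    finally show ?thesis unfolding \<sigma>_def using R by simp
  qed
  have ds: "(\<sigma> has_real_derivative (2 * xi + 2 * r) / R) (at r)" for r
  proof -
    have "((\<lambda>r. A + 2 * xi * r + r^2) has_real_derivative 0 + 2 * xi * 1 + of_nat 2 * (1 * r ^ (2 - Suc 0))) (at r)"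
      by (intro DERIV_add DERIV_const DERIV_cmult DERIV_ident DERIV_power)
    then show ?thesis unfolding \<sigma>_def using DERIV_cdivide by fastforce
  qed
  have ds': "((\<lambda>r. (2 * xi + 2 * r) / R) has_real_derivative 2 / R) (at r)" for r
  proof -
    have "((\<lambda>r. 2 * xi + 2 * r) has_real_derivative 0 + 2 * 1) (at r)"
      by (intro DERIV_add DERIV_const DERIV_cmult DERIV_ident)
    then show ?thesis using DERIV_cdivide by fastforce
  qed
  have d1: "deriv (\<lambda>r. G (\<sigma> r)) = (\<lambda>r. G1 (\<sigma> r) * ((2 * xi + 2 * r) / R))"
  proof
    fix r show "deriv (\<lambda>r. G (\<sigma> r)) r = G1 (\<sigma> r) * ((2 * xi + 2 * r) / R)"
      by (rule DERIV_imp_deriv, rule DERIV_chain2[OF G_deriv[OF spos] ds])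
  qed
  have "((\<lambda>r. G1 (\<sigma> r) * ((2 * xi + 2 * r) / R)) has_real_derivative
      G2 (\<sigma> 0) * ((2 * xi + 2 * 0) / R) * ((2 * xi + 2 * 0) / R) + 2 / R * G1 (\<sigma> 0)) (at 0)"
    by (rule DERIV_mult[OF DERIV_chain2[OF G1_deriv[OF spos] ds] ds'])
  then have "deriv (\<lambda>r. G1 (\<sigma> r) * ((2 * xi + 2 * r) / R)) 0 =
      G2 (\<sigma> 0) * ((2 * xi + 2 * 0) / R) * ((2 * xi + 2 * 0) / R) + 2 / R * G1 (\<sigma> 0)"
    by (rule DERIV_imp_deriv)
  moreover have "\<sigma> 0 = sR b R x t" unfolding \<sigma>_def sR_def Qty_def A_def by simp
  ultimately show ?thesis unfolding g d1 xi_def by simp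
qed

lemma lap_eq: fixes x :: "real ^ 'n" assumes qd: "q = 2 * conj_exp p" and R: "R > 0" and t: "t \<ge> 0"
  shows "lap (\<lambda>y. psiR b \<eta> p R y t) x =
    G2 (sR b R x t) * (4 * (norm x)\<^sup>2 / R^2) + G1 (sR b R x t) * (2 * real CARD('n) / R)"
    (is "_ = ?r")
proof -
  have "lap (\<lambda>y. psiR b \<eta> p R y t) x =
      (\<Sum>i\<in>UNIV. G2 (sR b R x t) * (4 / R^2) * (x$i * x$i) + G1 (sR b R x t) * (2 / R))"
    unfolding lap_def lap_i[OF qd R t] by (intro sum.cong refl) (simp add: power2_eq_square field_simps)
  also have "\<dots> = G2 (sR b R x t) * (4 / R^2) * (\<Sum>i\<in>UNIV. x$i * x$i) + G1 (sR b R x t) * (2 / R) * real CARD('n)"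
    by (simp add: sum.distrib sum_distrib_left)
  also have "(\<Sum>i\<in>UNIV. x$i * x$i) = (norm x)\<^sup>2"
    unfolding power2_norm_eq_inner inner_vec_def by simp
  finally show ?thesis by (simp add: field_simps)
qed

end


theorem lemma2p5:
  fixes p :: real and b b' \<eta> \<eta>' \<eta>'' :: "real \<Rightarrow> real"
  assumes p: "p > 1"
    and b_deriv: "\<forall>t\<ge>0. (b has_real_derivative b' t) (at t within {0..})"
    and b'_cont: "continuous_on {0..} b'"
    and b_pos: "\<forall>t\<ge>0. b t > 0"
    and b_limsup: "Limsup at_top (\<lambda>t. ereal (\<bar>b' t\<bar> / (b t)\<^sup>2)) < 1"
    and eta_deriv: "\<forall>s\<ge>0. (\<eta> has_real_derivative \<eta>' s) (at s within {0..})"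
    and eta'_deriv: "\<forall>s\<ge>0. (\<eta>' has_real_derivative \<eta>'' s) (at s within {0..})"
    and eta''_cont: "continuous_on {0..} \<eta>''"
    and eta_one: "\<forall>s. 0 \<le> s \<and> s \<le> 1/2 \<longrightarrow> \<eta> s = 1"
    and eta_decr: "\<forall>s t. 1/2 < s \<and> s \<le> t \<and> t < 1 \<longrightarrow> \<eta> t \<le> \<eta> s"
    and eta_zero: "\<forall>s\<ge>1. \<eta> s = 0"
  shows
    "(\<forall>R>0. \<forall>(x::real^'n) t.
        (inP b (R/2) x t \<longrightarrow> psiR b \<eta> p R x t = 1) \<and>
        (t \<ge> 0 \<and> \<not> inP b R x t \<longrightarrow> psiR b \<eta> p R x t = 0))
   \<and> (\<exists>C1>0. \<forall>R>0. \<forall>(x::real^'n) t. inP b R x t \<longrightarrow>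
        \<bar>dt (psiR b \<eta> p R) x t\<bar> \<le> C1 / R * Phi b t * (psiR_star b \<eta> p R x t) powr (1/p))
   \<and> (\<exists>C2>0. \<forall>R>0. \<forall>(x::real^'n) t. inP b R x t \<longrightarrow>
        \<bar>lap (\<lambda>y. psiR b \<eta> p R y t) x\<bar> \<le> C2 / R * (psiR_star b \<eta> p R x t) powr (1/p))
   \<and> (\<not> ((\<lambda>t. 1 / b t) integrable_on {0..}) \<longrightarrow>
      (\<exists>C3>0. \<forall>R>0. \<forall>(x::real^'n) t. inP b R x t \<longrightarrow>
        \<bar>dt (dt (psiR b \<eta> p R)) x t\<bar> \<le> C3 / R * (psiR_star b \<eta> p R x t) powr (1/p)))"
proof -
  interpret bctx b b' by (rule bctx.intro) (fact b_deriv b_pos b_limsup)+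
  define q where "q = 2 * conj_exp p"
  have q2: "q > 2"
  proof -
    have "p / (p - 1) > 1" using p by simp
    then show ?thesis unfolding q_def conj_exp_def by simp
  qed
  interpret mctx b b' \<eta> \<eta>' \<eta>'' q
    by (intro mctx.intro bctx.intro ectx.intro) (fact b_deriv b_pos b_limsup q2 eta_deriv eta'_deriv eta''_cont eta_one eta_decr eta_zero)+
  have qeq: "q * (1 / p) = q - 2" unfolding q_def conj_exp_def using p by (simp add: field_simps)
  have pw: "(psiR_star b \<eta> p R x t) powr (1/p) = eta_star \<eta> (sR b R x t) powr (q - 2)" for R x t
    unfolding psiR_star_def q_def[symmetric] powr_powr qeq ..
  obtain K where K: "K > 0" "\<forall>s>0. \<bar>G1 s\<bar> \<le> K * eta_star \<eta> s powr (q - 2) \<and> \<bar>G2 s\<bar> \<le> K * eta_star \<eta> s powr (q - 2)"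
    using G_bounds by blast
  obtain L where L: "L \<ge> 0" "\<forall>t\<ge>0. \<bar>b t * Phi b t - 1\<bar> \<le> L" using bPhi_bound by blast
  obtain Cp where Cp: "\<forall>t\<ge>0. (Phi b t)\<^sup>2 \<le> Cp * (1 + integral {0..t} (Phi b))" using Phi_sq by blast
  have part1: "\<forall>R>0. \<forall>(x::real^'n) t.
        (inP b (R/2) x t \<longrightarrow> psiR b \<eta> p R x t = 1) \<and>
        (t \<ge> 0 \<and> \<not> inP b R x t \<longrightarrow> psiR b \<eta> p R x t = 0)"
  proof (intro allI impI conjI)
    fix R :: real and x :: "real^'n" and t
    assume R: "R > 0"
    {
      assume "inP b (R/2) x t"
      then have t: "t \<ge> 0" and Q: "Qty b x t \<le> R/2" unfolding inP_def by auto
      have "sR b R x t \<le> 1/2" unfolding sR_def using Q R by (simp add: divide_le_eq)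
      moreover have "sR b R x t \<ge> 0" using S_pos[OF R t, of x] by simp
      ultimately have "\<eta> (sR b R x t) = 1" using eta_one by simp
      then show "psiR b \<eta> p R x t = 1" unfolding psiR_def by simp
    }
    {
      assume a: "t \<ge> 0 \<and> \<not> inP b R x t"
      then have "Qty b x t > R" unfolding inP_def by auto
      then have "sR b R x t \<ge> 1" unfolding sR_def using R by (simp add: le_divide_eq)
      then have "\<eta> (sR b R x t) = 0" using eta_zero by simp
      then show "psiR b \<eta> p R x t = 0" unfolding psiR_def by simp
    }
  qed
  have basic: "t \<ge> 0 \<and> (norm x)\<^sup>2 \<le> R \<and> 1 + integral {0..t} (Phi b) \<le> R \<and> sR b R x t > 0"
    if R: "R > 0" and P: "inP b R x t" for R and x :: "real^'n" and t
  proof -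
    have t: "t \<ge> 0" and Q: "Qty b x t \<le> R" using P unfolding inP_def by auto
    have "integral {0..t} (Phi b) \<ge> 0" by (rule I0[OF t])
    moreover have "(norm x)\<^sup>2 \<ge> 0" by simp
    ultimately show ?thesis using Q t S_pos[OF R t, of x] unfolding Qty_def by linarith
  qed
  have part2: "\<exists>C1>0. \<forall>R>0. \<forall>(x::real^'n) t. inP b R x t \<longrightarrow>
        \<bar>dt (psiR b \<eta> p R) x t\<bar> \<le> C1 / R * Phi b t * (psiR_star b \<eta> p R x t) powr (1/p)"
  proof (intro exI[of _ K] conjI allI impI)
    fix R :: real and x :: "real^'n" and t
    assume R: "R > 0" and P: "inP b R x t"
    note B = basic[OF R P]
    define s where "s = sR b R x t"
    define e where "e = eta_star \<eta> s powr (q - 2)"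
    have Pn: "Phi b t \<ge> 0" using Phi_nonneg B by simp
    have D: "dt (psiR b \<eta> p R) x t = G1 s * (Phi b t / R)"
      unfolding s_def by (rule dt_psi[OF q_def R]) (use B in simp)
    have "\<bar>dt (psiR b \<eta> p R) x t\<bar> = \<bar>G1 s\<bar> * (Phi b t / R)"
      unfolding D using Pn R by (simp add: abs_mult)
    also have "\<dots> \<le> (K * e) * (Phi b t / R)"
      by (rule mult_right_mono) (use K(2) B Pn R in \<open>auto simp: s_def e_def\<close>)
    also have "\<dots> = K / R * Phi b t * (psiR_star b \<eta> p R x t) powr (1/p)"
      unfolding pw e_def s_def by simp
    finally show "\<bar>dt (psiR b \<eta> p R) x t\<bar> \<le> K / R * Phi b t * (psiR_star b \<eta> p R x t) powr (1/p)" .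
  qed (use K in auto)
  have part3: "\<exists>C2>0. \<forall>R>0. \<forall>(x::real^'n) t. inP b R x t \<longrightarrow>
        \<bar>lap (\<lambda>y. psiR b \<eta> p R y t) x\<bar> \<le> C2 / R * (psiR_star b \<eta> p R x t) powr (1/p)"
  proof (intro exI[of _ "K * (4 + 2 * real CARD('n))"] conjI allI impI)
    fix R :: real and x :: "real^'n" and t
    assume R: "R > 0" and P: "inP b R x t"
    note B = basic[OF R P]
    define s where "s = sR b R x t"
    define e where "e = eta_star \<eta> s powr (q - 2)"
    have e0: "e \<ge> 0" unfolding e_def by simp
    have b1: "\<bar>G1 s\<bar> \<le> K * e" "\<bar>G2 s\<bar> \<le> K * e" using K(2) B unfolding s_def e_def by auto
    have nx: "4 * (norm x)\<^sup>2 / R^2 \<le> 4 / R"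
    proof -
      have "4 * (norm x)\<^sup>2 / R^2 \<le> 4 * R / R^2" using B R by (intro divide_right_mono) auto
      also have "\<dots> = 4 / R" using R by (simp add: power2_eq_square)
      finally show ?thesis .
    qed
    have "\<bar>lap (\<lambda>y. psiR b \<eta> p R y t) x\<bar> \<le> \<bar>G2 s\<bar> * (4 * (norm x)\<^sup>2 / R^2) + \<bar>G1 s\<bar> * (2 * real CARD('n) / R)"
    proof -
      have a0: "4 * (norm x)\<^sup>2 / R^2 \<ge> 0" by simp
      have c0: "2 * real CARD('n) / R \<ge> 0" using R by simp
      have "\<bar>G2 s * (4 * (norm x)\<^sup>2 / R^2) + G1 s * (2 * real CARD('n) / R)\<bar>
          \<le> \<bar>G2 s * (4 * (norm x)\<^sup>2 / R^2)\<bar> + \<bar>G1 s * (2 * real CARD('n) / R)\<bar>"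
        by (rule abs_triangle_ineq)
      also have "\<dots> = \<bar>G2 s\<bar> * (4 * (norm x)\<^sup>2 / R^2) + \<bar>G1 s\<bar> * (2 * real CARD('n) / R)"
        unfolding abs_mult abs_of_nonneg[OF a0] abs_of_nonneg[OF c0] ..
      finally show ?thesis unfolding lap_eq[OF q_def R conjunct1[OF B]] s_def .
    qed
    also have "\<dots> \<le> (K * e) * (4 / R) + (K * e) * (2 * real CARD('n) / R)"
    proof (rule add_mono)
      show "\<bar>G2 s\<bar> * (4 * (norm x)\<^sup>2 / R^2) \<le> (K * e) * (4 / R)"
        using b1 nx K e0 by (intro mult_mono) auto
      show "\<bar>G1 s\<bar> * (2 * real CARD('n) / R) \<le> (K * e) * (2 * real CARD('n) / R)"
        using b1 R by (intro mult_right_mono) auto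
    qed
    also have "\<dots> = K * (4 + 2 * real CARD('n)) / R * e"
      using R by (simp add: field_simps)
    also have "\<dots> = K * (4 + 2 * real CARD('n)) / R * (psiR_star b \<eta> p R x t) powr (1/p)"
      unfolding pw e_def s_def ..
    finally show "\<bar>lap (\<lambda>y. psiR b \<eta> p R y t) x\<bar> \<le> K * (4 + 2 * real CARD('n)) / R * (psiR_star b \<eta> p R x t) powr (1/p)" .
  qed (use K in auto)
  have part4: "\<exists>C3>0. \<forall>R>0. \<forall>(x::real^'n) t. inP b R x t \<longrightarrow>
        \<bar>dt (dt (psiR b \<eta> p R)) x t\<bar> \<le> C3 / R * (psiR_star b \<eta> p R x t) powr (1/p)"
  proof (intro exI[of _ "K * (\<bar>Cp\<bar> + L + 1)"] conjI allI impI)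
    show "K * (\<bar>Cp\<bar> + L + 1) > 0" using K L by simp
  next
    fix R :: real and x :: "real^'n" and t
    assume R: "R > 0" and P: "inP b R x t"
    note B = basic[OF R P]
    define s where "s = sR b R x t"
    define e where "e = eta_star \<eta> s powr (q - 2)"
    have e0: "e \<ge> 0" unfolding e_def by simp
    have b1: "\<bar>G1 s\<bar> \<le> K * e" "\<bar>G2 s\<bar> \<le> K * e" using K(2) B unfolding s_def e_def by auto
    have ph: "(Phi b t / R) * (Phi b t / R) \<le> \<bar>Cp\<bar> / R"
    proof -
      have "(Phi b t)\<^sup>2 \<le> Cp * (1 + integral {0..t} (Phi b))" using Cp B by auto
      also have "\<dots> \<le> \<bar>Cp\<bar> * (1 + integral {0..t} (Phi b))"
        using I0[of t] B by (intro mult_right_mono) auto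
      also have "\<dots> \<le> \<bar>Cp\<bar> * R" using B by (intro mult_left_mono) auto
      finally have "(Phi b t)\<^sup>2 \<le> \<bar>Cp\<bar> * R" .
      then have "(Phi b t)\<^sup>2 / R^2 \<le> \<bar>Cp\<bar> * R / R^2" using R by (intro divide_right_mono) auto
      then show ?thesis using R by (simp add: power2_eq_square)
    qed
    have "\<bar>dt (dt (psiR b \<eta> p R)) x t\<bar> \<le> \<bar>G2 s\<bar> * ((Phi b t / R) * (Phi b t / R)) + \<bar>b t * Phi b t - 1\<bar> / R * \<bar>G1 s\<bar>"
    proof -
      have a0: "(Phi b t / R) * (Phi b t / R) \<ge> 0" by simp
      have "\<bar>G2 s * (Phi b t / R) * (Phi b t / R) + (b t * Phi b t - 1) / R * G1 s\<bar>
          \<le> \<bar>G2 s * ((Phi b t / R) * (Phi b t / R))\<bar> + \<bar>(b t * Phi b t - 1) / R * G1 s\<bar>"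
        unfolding mult.assoc by (rule abs_triangle_ineq)
      also have "\<dots> = \<bar>G2 s\<bar> * ((Phi b t / R) * (Phi b t / R)) + \<bar>b t * Phi b t - 1\<bar> / R * \<bar>G1 s\<bar>"
        unfolding abs_mult abs_of_nonneg[OF a0] abs_divide using R by simp
      finally show ?thesis unfolding ddt_psi[OF q_def R conjunct1[OF B]] s_def .
    qed
    also have "\<dots> \<le> (K * e) * (\<bar>Cp\<bar> / R) + L / R * (K * e)"
    proof (rule add_mono)
      show "\<bar>G2 s\<bar> * ((Phi b t / R) * (Phi b t / R)) \<le> (K * e) * (\<bar>Cp\<bar> / R)"
        using b1 ph K e0 by (intro mult_mono) auto
      show "\<bar>b t * Phi b t - 1\<bar> / R * \<bar>G1 s\<bar> \<le> L / R * (K * e)"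
        using b1 R L B by (intro mult_mono divide_right_mono) auto
    qed
    also have "\<dots> = K * (\<bar>Cp\<bar> + L) / R * e"
      using R by (simp add: field_simps)
    also have "\<dots> \<le> K * (\<bar>Cp\<bar> + L + 1) / R * e"
      using K R e0 by (intro mult_right_mono divide_right_mono mult_left_mono) auto
    also have "\<dots> = K * (\<bar>Cp\<bar> + L + 1) / R * (psiR_star b \<eta> p R x t) powr (1/p)"
      unfolding pw e_def s_def ..
    finally show "\<bar>dt (dt (psiR b \<eta> p R)) x t\<bar> \<le> K * (\<bar>Cp\<bar> + L + 1) / R * (psiR_star b \<eta> p R x t) powr (1/p)" .
  qed
  show ?thesis using part1 part2 part3 part4 by blast
qed


end
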